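(* For integers $e_1,\dots,e_l\ge1$ the coefficients of the series \[ T\begin{pmatrix}X_1,\dots,X_l\\ Y_1,\dots,Y_l\\ e_1,\dots,e_l\end{pmatrix}:=\sum_{u_1>\dots>u_l>0}\prod_{j=1}^{l}E_{u_j}(Y_j)\,L_{u_j}(X_j)^{e_j} \] (as a power series in $X_1,\dots,X_l,Y_1,\dots,Y_l$) lie in $\mathcal{BD}$, and \[ \mathcal{D}^Y_{e_1,\dots,e_l}\,T\binom{X_1,\dots,X_l}{Y_1,\dots,Y_l}=T\begin{pmatrix}Y_1+\dots+Y_l,\ \dots,\ Y_1+Y_2,\ Y_1\\ X_l,\ X_{l-1}-X_l,\ \dots,\ X_1-X_2\\ e_1,\ \dots,\ e_l\end{pmatrix}. \]
   Context: $E_n(X)=e^{nX}$, $L_n(X)=\frac{e^Xq^n}{1-e^Xq^n}$. Bi-brackets: for integers $s_j\ge1$, $r_j\ge0$, \[ \left[\begin{matrix}s_1,\dots,s_l\\ r_1,\dots,r_l\end{matrix}\right]:=\sum_{\substack{u_1>\dots>u_l>0\\ v_1,\dots,v_l>0}}\prod_{j=1}^{l}\frac{u_j^{r_j}}{r_j!}\,\frac{v_j^{s_j-1}}{(s_j-1)!}\;q^{u_1v_1+\dots+u_lv_l}\in\mathbb{Q}[[q]], \] $\mathcal{BD}$ is the $\mathbb{Q}$-span of $1$ and all bi-brackets, and $T\binom{X_1,\dots,X_l}{Y_1,\dots,Y_l}:=\sum_{s_j,r_j>0}\left[\begin{matrix}s_1,\dots,s_l\\ r_1-1,\dots,r_l-1\end{matrix}\right]\prod_j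 X_j^{s_j-1}Y_j^{r_j-1}$ (this equals the series with all $e_j=1$). The differential operator is $\mathcal{D}^Y_{e_1,\dots,e_l}:=D_{Y_1,e_1}D_{Y_2,e_2}\cdots D_{Y_l,e_l}$ with \[ D_{Y_j,e}:=\prod_{k=1}^{e-1}\Big(\frac1k\Big(\frac{\partial}{\partial Y_{l-j+1}}-\frac{\partial}{\partial Y_{l-j+2}}\Big)-1\Big),\qquad \frac{\partial}{\partial Y_{l+1}}:=0 \] (an empty product is the identity). *)

theory Defs
  imports "HOL-Computational_Algebra.Formal_Power_Series" "HOL-Library.Poly_Mapping"
begin

text \<open>q-series live in \<open>rat fps\<close> (the variable is q).  A formal power series in the
  2l variables X_1..X_l, Y_1..Y_l with coefficients in Q[[q]] is represented by its
  coefficient function: \<open>c a b\<close> is the coefficient of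
  X_1^(a!0)...X_l^(a!(l-1)) Y_1^(b!0)...Y_l^(b!(l-1)) (lists a, b of length l).\<close>

type_synonym mser = "nat list \<Rightarrow> nat list \<Rightarrow> rat fps"

definition bibr :: "nat list \<Rightarrow> nat list \<Rightarrow> rat fps" where
  "bibr s r = Abs_fps (\<lambda>N.
     \<Sum>(u,v)\<in>{(u,v). length u = length s \<and> length v = length s \<and> sorted_wrt (>) u
                 \<and> (\<forall>x\<in>set u. 0 < x) \<and> (\<forall>x\<in>set v. 0 < x)
                 \<and> (\<Sum>j<length s. u!j * v!j) = N}.
       \<Prod>j<length s. (of_nat (u!j) ^ (r!j) / fact (r!j))
                    * (of_nat (v!j) ^ (s!j - 1) / fact (s!j - 1)))"

inductive_set BD :: "rat fps set" where
  BD_one: "1 \<in> BD"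
| BD_bibr: "length s = length r \<Longrightarrow> (\<forall>x\<in>set s. 1 \<le> x) \<Longrightarrow> bibr s r \<in> BD"
| BD_add: "x \<in> BD \<Longrightarrow> y \<in> BD \<Longrightarrow> x + y \<in> BD"
| BD_smult: "x \<in> BD \<Longrightarrow> fps_const (c::rat) * x \<in> BD"

text \<open>Generating series T(X;Y) of bi-brackets: coefficient of X^a Y^b is [a+1; b].\<close>
definition Tbi :: mser where
  "Tbi a b = bibr (map Suc a) b"

text \<open>E_u(X) = e^{uX} and L_u(X) = e^X q^u / (1 - e^X q^u) as power series in one
  variable X with coefficients in Q[[q]].\<close>
definition Eser :: "nat \<Rightarrow> rat fps fps" where
  "Eser u = Abs_fps (\<lambda>n. fps_const (of_nat u ^ n / fact n))"

definition Lser :: "nat \<Rightarrow> rat fps fps" where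
  "Lser u = (let w = fps_const (fps_X ^ u) * Eser 1 in w * inverse (1 - w))"

text \<open>Terms with u_1 > N do not
  contribute to the coefficient of q^N (L_u(X)^e has q-order \<ge> u e), so this finite
  sum computes the q-adically convergent infinite sum coefficientwise.\<close>
definition decr :: "nat \<Rightarrow> nat \<Rightarrow> nat list set" where
  "decr l N = {u. length u = l \<and> sorted_wrt (>) u \<and> (\<forall>x\<in>set u. 0 < x \<and> x \<le> N)}"

definition Tgen :: "nat list \<Rightarrow> mser" where
  "Tgen es a b = Abs_fps (\<lambda>N.
     fps_nth (\<Sum>u\<in>decr (length es) N.
        \<Prod>j<length es. fps_nth (Eser (u!j)) (b!j) * fps_nth (Lser (u!j) ^ (es!j)) (a!j)) N)"

text \<open>Partial derivative with respect to the variable Y_{k+1} (0-based index k);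
  the derivative with respect to Y_{l+1} (index l) is 0.\<close>
definition dY :: "nat \<Rightarrow> nat \<Rightarrow> mser \<Rightarrow> mser" where
  "dY l k c = (\<lambda>a b. if k < l then of_nat (b!k + 1) * c a (b[k := b!k + 1]) else 0)"

text \<open>(1/k)(d/dY_{l-j+1} - d/dY_{l-j+2}) - 1\<close>
definition Dstep :: "nat \<Rightarrow> nat \<Rightarrow> nat \<Rightarrow> mser \<Rightarrow> mser" where
  "Dstep l j k c = (\<lambda>a b. fps_const (1 / of_nat k) * (dY l (l - j) c a b - dY l (l - j + 1) c a b) - c a b)"

text \<open>D_{Y_j,e} = prod_{k=1}^{e-1} Dstep (commuting factors)\<close>
definition DYj :: "nat \<Rightarrow> nat \<Rightarrow> nat \<Rightarrow> mser \<Rightarrow> mser" where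
  "DYj l j e c = fold (Dstep l j) [1..<e] c"

definition DY :: "nat list \<Rightarrow> mser \<Rightarrow> mser" where
  "DY es c = foldr (\<lambda>j. DYj (length es) j (es!(j - 1))) [1..<Suc (length es)] c"

text \<open>Polynomials over Q in variables indexed by nat: variable i < l is X_{i+1},
  variable l + i is Y_{i+1}.\<close>
type_synonym rpoly = "(nat \<Rightarrow>\<^sub>0 nat) \<Rightarrow>\<^sub>0 rat"

definition pvar :: "nat \<Rightarrow> rpoly" where
  "pvar k = Poly_Mapping.single (Poly_Mapping.single k 1) 1"

definition pmono :: "nat \<Rightarrow> nat list \<Rightarrow> nat list \<Rightarrow> (nat \<Rightarrow>\<^sub>0 nat)" where
  "pmono l a b = (\<Sum>j<l. Poly_Mapping.single j (a!j) + Poly_Mapping.single (l + j) (b!j))"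

text \<open>New upper variables: X'_{j+1} = Y_1 + ... + Y_{l-j}.\<close>
definition Xsub :: "nat \<Rightarrow> nat \<Rightarrow> rpoly" where
  "Xsub l j = (\<Sum>i<l - j. pvar (l + i))"

text \<open>New lower variables: Y'_1 = X_l, Y'_{j+1} = X_{l-j} - X_{l-j+1} (j \<ge> 1).\<close>
definition Ysub :: "nat \<Rightarrow> nat \<Rightarrow> rpoly" where
  "Ysub l j = (if j = 0 then pvar (l - 1) else pvar (l - j - 1) - pvar (l - j))"

text \<open>Coefficient of X^a Y^b in T(X'; Y'; e).  The substitution is homogeneous linear,
  so only terms of the same total degree contribute.\<close>
definition Tsubst :: "nat list \<Rightarrow> mser" where
  "Tsubst es a b = (let l = length es in
     \<Sum>(a',b')\<in>{(a',b'). length a' = l \<and> length b' = l \<and> sum_list a' + sum_list b' = sum_list a + sum_list b}.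
        fps_const (Poly_Mapping.lookup (\<Prod>j<l. Xsub l j ^ (a'!j) * Ysub l j ^ (b'!j)) (pmono l a b)) * Tgen es a' b')"

end

theory Submission
  imports Defs "HOL-Computational_Algebra.Polynomial"
begin


definition cc :: "nat \<Rightarrow> nat \<Rightarrow> rat" where
  "cc e v = (if e = 0 then (if v = 0 then 1 else 0) else if v = 0 then 0 else of_nat ((v-1) choose (e-1)))"

lemma cc_Suc_0[simp]: "cc (Suc e) 0 = 0" by (simp add: cc_def)

lemma cc_rec: "cc (Suc e) (Suc v) = cc e v + cc (Suc e) v"
proof (cases e)
  case 0 then show ?thesis by (cases v) (auto simp: cc_def)
next
  case (Suc e') then show ?thesis
    by (cases v) (auto simp: cc_def)
qed

definition Phi :: "nat \<Rightarrow> nat \<Rightarrow> rat fps fps" where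
  "Phi u e = Abs_fps (\<lambda>a. Abs_fps (\<lambda>M. if u dvd M then cc e (M div u) * of_nat (M div u) ^ a / fact a else 0))"

definition W :: "nat \<Rightarrow> rat fps fps" where
  "W u = fps_const (fps_X ^ u) * Eser 1"

lemma binom_exp: "(\<Sum>i=0..a. (x::rat) ^ i / fact i * (1 / fact (a - i))) = (x + 1) ^ a / fact a"
proof -
  have "(x + 1) ^ a = (\<Sum>i\<le>a. of_nat (a choose i) * x ^ i * 1 ^ (a - i))"
    by (rule binomial_ring)
  also have "\<dots> = (\<Sum>i\<le>a. fact a * (x ^ i / fact i * (1 / fact (a - i))))"
    by (rule sum.cong) (auto simp: binomial_fact field_simps)
  also have "\<dots> = fact a * (\<Sum>i=0..a. x ^ i / fact i * (1 / fact (a - i)))"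
    by (simp add: sum_distrib_left atLeast0AtMost)
  finally show ?thesis by simp
qed

lemma coeff_mult_W:
  assumes u: "1 \<le> u"
  shows "fps_nth (fps_nth (F * W u) a) M = (if M < u then 0 else (\<Sum>i=0..a. fps_nth (fps_nth F i) (M - u) * (1 / fact (a - i))))"
proof -
  have "F * W u = fps_const (fps_X ^ u) * (F * Eser 1)"
    by (simp add: W_def algebra_simps)
  then have "fps_nth (F * W u) a = fps_X ^ u * fps_nth (F * Eser 1) a"
    by (simp only: fps_mult_left_const_nth)
  moreover have "fps_nth (F * Eser 1) a = (\<Sum>i=0..a. fps_nth F i * fps_const (1 / fact (a - i)))"
    by (simp add: fps_mult_nth Eser_def)
  ultimately show ?thesis
    by (simp add: fps_X_power_mult_nth fps_sum_nth)
qed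

lemma Phi_rec:
  assumes u: "1 \<le> u"
  shows "Phi u (Suc e) = Phi u e * W u + Phi u (Suc e) * W u"
proof (rule fps_ext, rule fps_ext)
  fix a M
  show "fps_nth (fps_nth (Phi u (Suc e)) a) M = fps_nth (fps_nth (Phi u e * W u + Phi u (Suc e) * W u) a) M"
  proof (cases "M < u")
    case True
    then have "u dvd M \<Longrightarrow> M = 0" using dvd_imp_le by (cases M) auto
    with True show ?thesis using u by (auto simp: coeff_mult_W Phi_def)
  next
    case False
    then obtain M' where M: "M = M' + u" by (metis add.commute le_add_diff_inverse not_le)
    have dv: "u dvd M \<longleftrightarrow> u dvd M'" using M by auto
    show ?thesis
    proof (cases "u dvd M'")
      case False
      then show ?thesis using dv M u by (simp add: coeff_mult_W Phi_def)
    next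
      case True
      then obtain v where v: "M' = u * v" by auto
      have Md: "M div u = Suc v" "M' div u = v" using u M v by auto
      have "fps_nth (fps_nth (Phi u e * W u + Phi u (Suc e) * W u) a) M
          = (\<Sum>i=0..a. cc e v * (of_nat v ^ i / fact i * (1 / fact (a - i))))
          + (\<Sum>i=0..a. cc (Suc e) v * (of_nat v ^ i / fact i * (1 / fact (a - i))))"
        using u M v Md True by (simp add: coeff_mult_W Phi_def)
      also have "\<dots> = cc e v * (\<Sum>i=0..a. of_nat v ^ i / fact i * (1 / fact (a - i)))
           + cc (Suc e) v * (\<Sum>i=0..a. of_nat v ^ i / fact i * (1 / fact (a - i)))"
        by (simp only: sum_distrib_left)
      also have "\<dots> = (cc e v + cc (Suc e) v) * ((of_nat v + 1) ^ a / fact a)"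
        unfolding binom_exp by (simp add: algebra_simps add_divide_distrib)
      also have "\<dots> = fps_nth (fps_nth (Phi u (Suc e)) a) M"
        using dv True Md by (simp add: Phi_def cc_rec add.commute)
      finally show ?thesis by simp
    qed
  qed
qed

lemma W0: "fps_nth (W u) 0 = fps_X ^ u"
  by (simp add: W_def Eser_def)

lemma inv_right:
  assumes u: "1 \<le> u"
  shows "(1 - W u) * inverse (1 - W u) = 1"
proof -
  let ?F = "1 - W u"
  have F0: "fps_nth ?F 0 = 1 - fps_X ^ u" by (simp add: W0)
  have "fps_nth (fps_nth ?F 0) 0 \<noteq> 0" using u unfolding F0 by (simp add: fps_X_power_nth)
  then have "fps_nth ?F 0 * inverse (fps_nth ?F 0) = 1" by (rule inverse_mult_eq_1')
  then have "?F * fps_right_inverse ?F (inverse (fps_nth ?F 0)) = 1" by (rule fps_right_inverse)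
  then show ?thesis by (simp add: fps_inverse_def)
qed

lemma Phi0: "1 \<le> u \<Longrightarrow> Phi u 0 = 1"
proof (rule fps_ext, rule fps_ext)
  fix a M assume u: "1 \<le> u"
  have "u dvd M \<Longrightarrow> M div u = 0 \<longleftrightarrow> M = 0" using u by auto
  then show "fps_nth (fps_nth (Phi u 0) a) M = fps_nth (fps_nth (1::rat fps fps) a) M"
    using u by (cases "a = 0") (auto simp: Phi_def cc_def)
qed

lemma Lser_pow:
  assumes u: "1 \<le> u"
  shows "Lser u ^ e = Phi u e"
proof (induction e)
  case 0 then show ?case using Phi0[OF u] by simp
next
  case (Suc e)
  have "Phi u (Suc e) * (1 - W u) = Phi u e * W u"
    using Phi_rec[OF u, of e] by (simp add: algebra_simps)
  have L: "Lser u = W u * inverse (1 - W u)" by (simp add: Lser_def W_def Let_def)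
  have "Phi u (Suc e) = Phi u (Suc e) * ((1 - W u) * inverse (1 - W u))"
    using inv_right[OF u] by simp
  also have "\<dots> = (Phi u (Suc e) * (1 - W u)) * inverse (1 - W u)" by (simp only: mult.assoc)
  also have "\<dots> = Phi u e * Lser u" unfolding L \<open>Phi u (Suc e) * (1 - W u) = Phi u e * W u\<close>
    by (simp only: mult.assoc)
  finally have "Phi u (Suc e) = Phi u e * Lser u" .
  then show ?case using Suc by (simp add: mult.commute)
qed


definition Cset :: "nat \<Rightarrow> nat \<Rightarrow> nat list set" where
  "Cset m D = {z. length z = m \<and> sum_list z = D}"

definition Pset :: "nat \<Rightarrow> nat \<Rightarrow> (nat list \<times> nat list) set" where
  "Pset l N = {(u,v). length u = l \<and> length v = l \<and> sorted_wrt (>) u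
                 \<and> (\<forall>x\<in>set u. 0 < x) \<and> (\<forall>x\<in>set v. 0 < x)
                 \<and> (\<Sum>j<l. u!j * v!j) = N}"

definition monoW :: "nat \<Rightarrow> nat list \<Rightarrow> nat list \<Rightarrow> nat list \<Rightarrow> nat list \<Rightarrow> rat" where
  "monoW l a b u v = (\<Prod>j<l. (of_nat (u!j) ^ (b!j) / fact (b!j)) * (of_nat (v!j) ^ (a!j) / fact (a!j)))"

definition cg :: "nat \<Rightarrow> (nat list \<Rightarrow> nat list \<Rightarrow> rat) \<Rightarrow> mser" where
  "cg l g a b = Abs_fps (\<lambda>N. \<Sum>(u,v)\<in>Pset l N. g u v * monoW l a b u v)"

lemma finite_Cset: "finite (Cset m D)"
proof -
  have "Cset m D \<subseteq> {z. set z \<subseteq> {..D} \<and> length z = m}"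
    by (auto simp: Cset_def intro: member_le_sum_list)
  then show ?thesis by (rule finite_subset) (simp add: finite_lists_length_eq)
qed

lemma Pset_le:
  assumes "(u,v) \<in> Pset l N" "j < l"
  shows "u!j \<le> N" "v!j \<le> N" "u!j * v!j \<le> N"
proof -
  have pos: "0 < u!j" "0 < v!j" using assms by (auto simp: Pset_def)
  have "u!j * v!j \<le> (\<Sum>j<l. u!j * v!j)"
    by (rule member_le_sum) (use assms in auto)
  then show le: "u!j * v!j \<le> N" using assms by (simp add: Pset_def)
  have "u!j \<le> u!j * v!j" using pos by (cases "v!j") auto
  then show "u!j \<le> N" using le by linarith
  have "v!j \<le> u!j * v!j" using pos by (cases "u!j") auto
  then show "v!j \<le> N" using le by linarith
qed

lemma finite_Pset: "finite (Pset l N)"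
proof -
  let ?A = "{z. set z \<subseteq> {..N} \<and> length z = l}"
  have "Pset l N \<subseteq> ?A \<times> ?A"
  proof
    fix p assume p: "p \<in> Pset l N"
    obtain u v where uv: "p = (u,v)" by (cases p)
    have l: "length u = l" "length v = l" using p uv by (auto simp: Pset_def)
    have "set u \<subseteq> {..N}"
    proof
      fix x assume "x \<in> set u"
      then obtain j where "j < l" "x = u!j" using l by (auto simp: in_set_conv_nth)
      then show "x \<in> {..N}" using Pset_le[of u v l N j] p uv by auto
    qed
    moreover have "set v \<subseteq> {..N}"
    proof
      fix x assume "x \<in> set v"
      then obtain j where "j < l" "x = v!j" using l by (auto simp: in_set_conv_nth)
      then show "x \<in> {..N}" using Pset_le[of u v l N j] p uv by auto
    qed
    ultimately show "p \<in> ?A \<times> ?A" using uv l by auto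
  qed
  then show ?thesis by (rule finite_subset) (simp add: finite_lists_length_eq)
qed

lemma finite_decr: "finite (decr l N)"
proof -
  have "decr l N \<subseteq> {z. set z \<subseteq> {..N} \<and> length z = l}" by (auto simp: decr_def)
  then show ?thesis by (rule finite_subset) (simp add: finite_lists_length_eq)
qed

lemma Cset_Suc: "Cset (Suc m) N = (\<lambda>(i,z). i#z) ` (SIGMA i:{0..N}. Cset m (N-i))"
proof
  show "Cset (Suc m) N \<subseteq> (\<lambda>(i,z). i#z) ` (SIGMA i:{0..N}. Cset m (N-i))"
  proof
    fix w assume w: "w \<in> Cset (Suc m) N"
    then obtain i z where "w = i#z" by (cases w) (auto simp: Cset_def)
    with w show "w \<in> (\<lambda>(i,z). i#z) ` (SIGMA i:{0..N}. Cset m (N-i))"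
      by (auto simp: Cset_def image_iff)
  qed
qed (auto simp: Cset_def)

lemma fps_prod_nth:
  fixes f :: "nat \<Rightarrow> 'a::comm_ring_1 fps"
  shows "fps_nth (\<Prod>j<m. f j) N = (\<Sum>z\<in>Cset m N. \<Prod>j<m. fps_nth (f j) (z!j))"
proof (induction m arbitrary: f N)
  case 0
  have "Cset 0 N = (if N = 0 then {[]} else {})" by (auto simp: Cset_def)
  then show ?case by simp
next
  case (Suc m)
  have "fps_nth (\<Prod>j<Suc m. f j) N = fps_nth (f 0 * (\<Prod>j<m. f (Suc j))) N"
    by (simp only: prod.lessThan_Suc_shift)
  also have "\<dots> = (\<Sum>i=0..N. fps_nth (f 0) i * (\<Sum>z\<in>Cset m (N-i). \<Prod>j<m. fps_nth (f (Suc j)) (z!j)))"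
    by (simp add: fps_mult_nth Suc.IH)
  also have "\<dots> = (\<Sum>(i,z)\<in>(SIGMA i:{0..N}. Cset m (N-i)). fps_nth (f 0) i * (\<Prod>j<m. fps_nth (f (Suc j)) (z!j)))"
    by (subst sum.Sigma[symmetric]) (auto simp: finite_Cset sum_distrib_left)
  also have "\<dots> = (\<Sum>w\<in>Cset (Suc m) N. \<Prod>j<Suc m. fps_nth (f j) (w!j))"
    unfolding Cset_Suc
    by (subst sum.reindex) (auto simp: inj_on_def simp del: prod.lessThan_Suc simp add: prod.lessThan_Suc_shift intro!: sum.cong)
  finally show ?case .
qed

lemma coeffF:
  assumes "1 \<le> x"
  shows "fps_nth (fps_nth (Eser x) b' * fps_nth (Lser x ^ e) a') m
     = of_nat x ^ b' / fact b' * (if x dvd m then cc e (m div x) * of_nat (m div x) ^ a' / fact a' else 0)"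
  using assms by (simp add: Lser_pow Eser_def Phi_def)

lemma sum_list_map_upt: "sum_list (map f [0..<n]) = (\<Sum>k<n. f k)"
  by (induction n) auto

lemma Tgen_eq:
  assumes es: "\<forall>e\<in>set es. 1 \<le> e" and la: "length a = length es" and lb: "length b = length es"
  shows "Tgen es a b = cg (length es) (\<lambda>u v. \<Prod>j<length es. cc (es!j) (v!j)) a b"
proof (rule fps_ext)
  fix N
  define l where "l = length es"
  define H where "H u m = (\<Prod>j<l. of_nat (u!j) ^ (b!j) / fact (b!j) *
     (if u!j dvd m!j then cc (es!j) (m!j div u!j) * of_nat (m!j div u!j) ^ (a!j) / fact (a!j) else 0))" for u m :: "nat list"
  define S where "S = {(u,m). u \<in> decr l N \<and> m \<in> Cset l N \<and> (\<forall>j<l. u!j dvd m!j \<and> 0 < m!j)}"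
  have "fps_nth (Tgen es a b) N = (\<Sum>u\<in>decr l N. fps_nth (\<Prod>j<l. fps_nth (Eser (u!j)) (b!j) * fps_nth (Lser (u!j) ^ (es!j)) (a!j)) N)"
    by (simp add: Tgen_def fps_sum_nth l_def)
  also have "\<dots> = (\<Sum>u\<in>decr l N. \<Sum>m\<in>Cset l N. H u m)"
  proof (rule sum.cong[OF refl])
    fix u assume u: "u \<in> decr l N"
    have pos: "\<And>j. j < l \<Longrightarrow> 1 \<le> u!j" using u by (auto simp: decr_def all_set_conv_all_nth Suc_le_eq)
    show "fps_nth (\<Prod>j<l. fps_nth (Eser (u!j)) (b!j) * fps_nth (Lser (u!j) ^ (es!j)) (a!j)) N = (\<Sum>m\<in>Cset l N. H u m)"
      unfolding fps_prod_nth H_def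
      by (intro sum.cong refl prod.cong) (rule coeffF, rule pos, simp)
  qed
  also have "\<dots> = (\<Sum>(u,m)\<in>decr l N \<times> Cset l N. H u m)"
    by (rule sum.cartesian_product)
  also have "\<dots> = (\<Sum>(u,m)\<in>S. H u m)"
  proof (rule sum.mono_neutral_right)
    show "finite (decr l N \<times> Cset l N)" by (simp add: finite_decr finite_Cset)
    show "S \<subseteq> decr l N \<times> Cset l N" by (auto simp: S_def)
    show "\<forall>i\<in>decr l N \<times> Cset l N - S. (case i of (u, m) \<Rightarrow> H u m) = 0"
    proof
      fix p assume p: "p \<in> decr l N \<times> Cset l N - S"
      obtain u m where um: "p = (u,m)" by (cases p)
      then obtain j where j: "j < l" "\<not> (u!j dvd m!j \<and> 0 < m!j)" using p by (auto simp: S_def)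
      have e1: "1 \<le> es!j" using es j by (auto simp: l_def)
      have z: "of_nat (u!j) ^ (b!j) / fact (b!j) *
     (if u!j dvd m!j then cc (es!j) (m!j div u!j) * of_nat (m!j div u!j) ^ (a!j) / fact (a!j) else 0) = (0::rat)"
        using j e1 by (cases "es!j") (auto simp: cc_def)
      have "H u m = 0" unfolding H_def using j(1) z by (intro prod_zero bexI[of _ j]) auto
      then show "(case p of (u, m) \<Rightarrow> H u m) = 0" using um by simp
    qed
  qed
  also have "\<dots> = (\<Sum>(u,v)\<in>Pset l N. (\<Prod>j<l. cc (es!j) (v!j)) * monoW l a b u v)"
  proof (rule sum.reindex_bij_witness[where j = "\<lambda>(u,m). (u, map (\<lambda>k. m!k div u!k) [0..<l])"
      and i = "\<lambda>(u,v). (u, map (\<lambda>k. u!k * v!k) [0..<l])"])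
    fix p assume p: "p \<in> S"
    obtain u m where um: "p = (u,m)" by (cases p)
    have L: "length u = l" "length m = l" using p um by (auto simp: S_def decr_def Cset_def)
    have dv: "\<And>k. k < l \<Longrightarrow> u!k dvd m!k \<and> 0 < m!k" using p um by (auto simp: S_def)
    have upos: "\<And>k. k < l \<Longrightarrow> 0 < u!k" using p um L by (auto simp: S_def decr_def all_set_conv_all_nth)
    show "(case (case p of (u, m) \<Rightarrow> (u, map (\<lambda>k. m!k div u!k) [0..<l])) of (u, v) \<Rightarrow> (u, map (\<lambda>k. u!k * v!k) [0..<l])) = p"
      using um L dv by (auto intro!: nth_equalityI)
    have sm: "sum_list m = N" using p um by (auto simp: S_def Cset_def)
    have "(\<Sum>k<l. u!k * (m!k div u!k)) = (\<Sum>k<l. m!k)"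
      by (rule sum.cong) (auto simp: dv)
    also have "\<dots> = N" using sm L by (simp add: sum_list_sum_nth atLeast0LessThan)
    finally have sN: "(\<Sum>k<l. u!k * (m!k div u!k)) = N" .
    have vpos: "\<And>k. k < l \<Longrightarrow> 0 < m!k div u!k"
      using dv upos by (metis dvd_div_eq_0_iff neq0_conv)
    show "(case p of (u, m) \<Rightarrow> (u, map (\<lambda>k. m!k div u!k) [0..<l])) \<in> Pset l N"
      using um L p sN vpos by (auto simp: Pset_def S_def decr_def all_set_conv_all_nth)
    show "(case (case p of (u, m) \<Rightarrow> (u, map (\<lambda>k. m!k div u!k) [0..<l])) of (u, v) \<Rightarrow> (\<Prod>j<l. cc (es!j) (v!j)) * monoW l a b u v) = (case p of (u, m) \<Rightarrow> H u m)"
      using um dv by (auto simp: H_def monoW_def prod.distrib[symmetric] mult_ac intro!: prod.cong)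
  next
    fix p assume p: "p \<in> Pset l N"
    obtain u v where uv: "p = (u,v)" by (cases p)
    have L: "length u = l" "length v = l" using p uv by (auto simp: Pset_def)
    have upos: "\<And>k. k < l \<Longrightarrow> 0 < u!k" "\<And>k. k < l \<Longrightarrow> 0 < v!k"
      using p uv L by (auto simp: Pset_def all_set_conv_all_nth)
    show "(case (case p of (u, v) \<Rightarrow> (u, map (\<lambda>k. u!k * v!k) [0..<l])) of (u, m) \<Rightarrow> (u, map (\<lambda>k. m!k div u!k) [0..<l])) = p"
      using uv L upos by (auto intro!: nth_equalityI)
    have ule: "\<And>k. k < l \<Longrightarrow> u!k \<le> N" using Pset_le p uv by blast
    have sN: "(\<Sum>k<l. u!k * v!k) = N" using p uv by (simp add: Pset_def)
    show "(case p of (u, v) \<Rightarrow> (u, map (\<lambda>k. u!k * v!k) [0..<l])) \<in> S"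
      using uv L p ule upos sN by (auto simp: S_def Pset_def decr_def Cset_def all_set_conv_all_nth sum_list_map_upt)
  qed
  also have "\<dots> = fps_nth (cg (length es) (\<lambda>u v. \<Prod>j<length es. cc (es!j) (v!j)) a b) N"
    by (simp add: cg_def l_def)
  finally show "fps_nth (Tgen es a b) N = fps_nth (cg (length es) (\<lambda>u v. \<Prod>j<length es. cc (es!j) (v!j)) a b) N" .
qed


lemma choose_step: "(m choose Suc k) * Suc k = (m choose k) * (m - k)"
  by (metis binomial_absorb_comp binomial_absorption mult.commute)

lemma cc_prod:
  assumes "1 \<le> n"
  shows "cc (Suc e) n = (\<Prod>k\<in>{1..<Suc e}. (of_nat n / of_nat k - 1))"
proof (induction e)
  case 0 then show ?case using assms by (simp add: cc_def)
next
  case (Suc e)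
  have "of_nat ((n-1) choose Suc e) * of_nat (Suc e) = (of_nat ((n-1) choose e) * of_nat (n - 1 - e) :: rat)"
    using choose_step[of "n-1" e] by (metis of_nat_mult)
  moreover have "of_nat ((n-1) choose e) * of_nat (n - 1 - e) = (of_nat ((n-1) choose e) * (of_nat n - 1 - of_nat e) :: rat)"
  proof (cases "e \<le> n - 1")
    case True then show ?thesis using assms by (simp add: of_nat_diff)
  next
    case False then show ?thesis by simp
  qed
  ultimately have "of_nat ((n-1) choose Suc e) = (of_nat ((n-1) choose e) * ((of_nat n - 1 - of_nat e) / of_nat (Suc e)) :: rat)"
    by (simp add: field_simps)
  also have "(of_nat n - 1 - of_nat e) / of_nat (Suc e) = (of_nat n / of_nat (Suc e) - 1 :: rat)"
    by (simp add: field_simps)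
  finally show ?case using Suc assms
    by (simp add: cc_def prod.atLeastLessThan_Suc)
qed

lemma Tbi_cg: "length a = l \<Longrightarrow> Tbi a b = cg l (\<lambda>_ _. 1) a b"
  unfolding Tbi_def bibr_def cg_def Pset_def monoW_def
  by (rule fps_ext) (auto intro!: sum.cong prod.cong)

definition agrees :: "nat \<Rightarrow> mser \<Rightarrow> (nat list \<Rightarrow> nat list \<Rightarrow> rat) \<Rightarrow> bool" where
  "agrees l c g \<longleftrightarrow> (\<forall>a b. length a = l \<longrightarrow> length b = l \<longrightarrow> c a b = cg l g a b)"

lemma bump_aux: "of_nat (n+1) * ((x::rat) ^ (n+1) / fact (n+1) * V) = x * (x ^ n / fact n * V)"
proof -
  have f: "fact (n+1) = (of_nat (n+1) * fact n :: rat)" by simp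
  have nz: "(of_nat (n+1) :: rat) \<noteq> 0" "(fact n :: rat) \<noteq> 0" by simp_all
  show ?thesis unfolding f using nz by (simp add: field_simps del: of_nat_Suc)
qed

lemma monoW_bump:
  assumes k: "k < l" and lb: "length b = l"
  shows "of_nat (b!k + 1) * monoW l a (b[k := b!k + 1]) u v = of_nat (u!k) * monoW l a b u v"
proof -
  define F where "F bb j = (of_nat (u!j) ^ (bb!j) / fact (bb!j)) * (of_nat (v!j) ^ (a!j) / fact (a!j) :: rat)" for bb j
  have kin: "k \<in> {..<l}" using k by simp
  have "monoW l a (b[k := b!k + 1]) u v = F (b[k := b!k + 1]) k * (\<Prod>j\<in>{..<l} - {k}. F (b[k := b!k + 1]) j)"
    unfolding monoW_def F_def[symmetric] by (rule prod.remove[OF _ kin]) simp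
  also have "(\<Prod>j\<in>{..<l} - {k}. F (b[k := b!k + 1]) j) = (\<Prod>j\<in>{..<l} - {k}. F b j)"
    by (rule prod.cong) (auto simp: F_def)
  finally have 1: "monoW l a (b[k := b!k + 1]) u v = F (b[k := b!k + 1]) k * (\<Prod>j\<in>{..<l} - {k}. F b j)" .
  have 2: "monoW l a b u v = F b k * (\<Prod>j\<in>{..<l} - {k}. F b j)"
    unfolding monoW_def F_def[symmetric] by (rule prod.remove[OF _ kin]) simp
  have 3: "of_nat (b!k + 1) * F (b[k := b!k + 1]) k = of_nat (u!k) * F b k"
    using k lb unfolding F_def by (simp only: nth_list_update_eq bump_aux)
  show ?thesis unfolding 1 2 using 3 by (metis mult.assoc)
qed

lemma dY_agree:
  assumes ag: "agrees l c g" and la: "length a = l" and lb: "length b = l"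
  shows "dY l k c a b = cg l (\<lambda>u v. g u v * (if k < l then of_nat (u!k) else 0)) a b"
proof (cases "k < l")
  case False
  then show ?thesis by (auto simp: dY_def cg_def intro!: fps_ext)
next
  case True
  have lb': "length (b[k := b!k + 1]) = l" using lb by simp
  have "dY l k c a b = of_nat (b!k + 1) * cg l g a (b[k := b!k + 1])"
    using True ag la lb' by (simp add: dY_def agrees_def)
  also have "\<dots> = cg l (\<lambda>u v. g u v * (if k < l then of_nat (u!k) else 0)) a b"
  proof (rule fps_ext)
    fix N
    have "fps_nth (of_nat (b!k + 1) * cg l g a (b[k := b!k + 1])) N
        = (\<Sum>(u,v)\<in>Pset l N. g u v * (of_nat (b!k + 1) * monoW l a (b[k := b!k + 1]) u v))"
      unfolding fps_mult_of_nat_nth cg_def fps_nth_Abs_fps sum_distrib_left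
      by (rule sum.cong) (auto simp: mult_ac)
    also have "\<dots> = (\<Sum>(u,v)\<in>Pset l N. g u v * (if k < l then of_nat (u!k) else 0) * monoW l a b u v)"
      apply (intro sum.cong refl)
      apply clarify
      apply (simp only: case_prod_conv monoW_bump[OF True lb] mult.assoc if_P[OF True])
      done
    finally show "fps_nth (of_nat (b!k + 1) * cg l g a (b[k := b!k + 1])) N
       = fps_nth (cg l (\<lambda>u v. g u v * (if k < l then of_nat (u!k) else 0)) a b) N"
      by (simp add: cg_def)
  qed
  finally show ?thesis .
qed

definition fac :: "nat \<Rightarrow> nat \<Rightarrow> nat \<Rightarrow> nat list \<Rightarrow> rat" where
  "fac l j k u = (of_nat (u!(l-j)) - (if l-j+1 < l then of_nat (u!(l-j+1)) else 0)) / of_nat k - 1"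

lemma Dstep_agree:
  assumes ag: "agrees l c g" and j: "1 \<le> j" "j \<le> l"
  shows "agrees l (Dstep l j k c) (\<lambda>u v. g u v * fac l j k u)"
  unfolding agrees_def
proof (intro allI impI)
  fix a b :: "nat list" assume la: "length a = l" and lb: "length b = l"
  have lj: "l - j < l" using j by simp
  show "Dstep l j k c a b = cg l (\<lambda>u v. g u v * fac l j k u) a b"
  proof (rule fps_ext)
    fix N
    have "fps_nth (Dstep l j k c a b) N = 1 / of_nat k *
        ((\<Sum>(u,v)\<in>Pset l N. g u v * (if l-j < l then of_nat (u!(l-j)) else 0) * monoW l a b u v)
        - (\<Sum>(u,v)\<in>Pset l N. g u v * (if l-j+1 < l then of_nat (u!(l-j+1)) else 0) * monoW l a b u v))
        - (\<Sum>(u,v)\<in>Pset l N. g u v * monoW l a b u v)"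
      unfolding Dstep_def dY_agree[OF ag la lb] using ag la lb
      by (simp add: cg_def agrees_def)
    also have "\<dots> = (\<Sum>(u,v)\<in>Pset l N. g u v * fac l j k u * monoW l a b u v)"
      using lj
      by (simp add: sum_subtractf[symmetric] sum_distrib_left case_prod_beta fac_def algebra_simps diff_divide_distrib)
    finally show "fps_nth (Dstep l j k c a b) N = fps_nth (cg l (\<lambda>u v. g u v * fac l j k u) a b) N"
      by (simp add: cg_def)
  qed
qed

lemma agrees_cong: "agrees l c g \<Longrightarrow> (\<And>u v. g u v = h u v) \<Longrightarrow> agrees l c h"
  by (metis ext)

lemma DYj_agree:
  assumes ag: "agrees l c g" and j: "1 \<le> j" "j \<le> l"
  shows "agrees l (DYj l j e c) (\<lambda>u v. g u v * (\<Prod>k\<in>{1..<e}. fac l j k u))"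
proof (induction e)
  case 0 then show ?case using ag by (simp add: DYj_def)
next
  case (Suc e)
  show ?case
  proof (cases "e = 0")
    case True then show ?thesis using ag by (simp add: DYj_def)
  next
    case False
    have "DYj l j (Suc e) c = Dstep l j e (DYj l j e c)"
      using False by (simp add: DYj_def)
    moreover have "agrees l (Dstep l j e (DYj l j e c)) (\<lambda>u v. (g u v * (\<Prod>k\<in>{1..<e}. fac l j k u)) * fac l j e u)"
      by (rule Dstep_agree[OF Suc j])
    ultimately show ?thesis using False
      by (auto simp: prod.atLeastLessThan_Suc mult_ac elim!: agrees_cong)
  qed
qed

lemma foldr_agree:
  assumes ag: "agrees l c g" and js: "\<forall>j\<in>set js. 1 \<le> j \<and> j \<le> l"
  shows "agrees l (foldr (\<lambda>j. DYj l j (es!(j-1))) js c)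
           (\<lambda>u v. g u v * prod_list (map (\<lambda>j. \<Prod>k\<in>{1..<es!(j-1)}. fac l j k u) js))"
  using js
proof (induction js)
  case Nil then show ?case using ag by simp
next
  case (Cons j js)
  have "agrees l (DYj l j (es!(j-1)) (foldr (\<lambda>j. DYj l j (es!(j-1))) js c))
     (\<lambda>u v. (g u v * prod_list (map (\<lambda>j. \<Prod>k\<in>{1..<es!(j-1)}. fac l j k u) js)) * (\<Prod>k\<in>{1..<es!(j-1)}. fac l j k u))"
    using Cons by (intro DYj_agree) auto
  then show ?case by (auto simp: mult_ac elim!: agrees_cong)
qed

lemma DY_agree:
  "agrees (length es) (DY es Tbi)
     (\<lambda>u v. prod_list (map (\<lambda>j. \<Prod>k\<in>{1..<es!(j-1)}. fac (length es) j k u) [1..<Suc (length es)]))"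
proof -
  have "agrees (length es) Tbi (\<lambda>_ _. 1)" by (simp add: agrees_def Tbi_cg)
  then have "agrees (length es) (foldr (\<lambda>j. DYj (length es) j (es!(j-1))) [1..<Suc (length es)] Tbi)
     (\<lambda>u v. 1 * prod_list (map (\<lambda>j. \<Prod>k\<in>{1..<es!(j-1)}. fac (length es) j k u) [1..<Suc (length es)]))"
    by (rule foldr_agree) auto
  then show ?thesis by (simp add: DY_def)
qed


definition Ssum :: "nat \<Rightarrow> nat list \<Rightarrow> nat list" where
  "Ssum l w = map (\<lambda>i. \<Sum>j<l-i. w!j) [0..<l]"

definition Dif :: "nat \<Rightarrow> nat list \<Rightarrow> nat list" where
  "Dif l w = map (\<lambda>i. w!(l-1-i) - (if i = 0 then 0 else w!(l-i))) [0..<l]"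

lemma Ssum_nth: "i < l \<Longrightarrow> Ssum l w ! i = (\<Sum>j<l-i. w!j)"
  by (simp add: Ssum_def)

lemma Dif_nth: "i < l \<Longrightarrow> Dif l w ! i = w!(l-1-i) - (if i = 0 then 0 else w!(l-i))"
  by (simp add: Dif_def)

lemma len_Ssum[simp]: "length (Ssum l w) = l" by (simp add: Ssum_def)
lemma len_Dif[simp]: "length (Dif l w) = l" by (simp add: Dif_def)

lemma dec_nth: "sorted_wrt (>) u \<Longrightarrow> i < j \<Longrightarrow> j < length u \<Longrightarrow> u!j < u!i"
  by (simp add: sorted_wrt_iff_nth_less)

lemma tele:
  assumes s: "sorted_wrt (>) u" and l: "length u = l"
  shows "1 \<le> n \<Longrightarrow> n \<le> l \<Longrightarrow> (\<Sum>j<n. Dif l u ! j) = u!(l-n)"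
proof (induction n)
  case 0 then show ?case by simp
next
  case (Suc n)
  show ?case
  proof (cases "n = 0")
    case True then show ?thesis using Suc by (simp add: Dif_nth)
  next
    case False
    have IH: "(\<Sum>j<n. Dif l u ! j) = u!(l-n)" using Suc False by simp
    have lt: "u!(l-n) < u!(l-1-n)" using Suc False s l by (intro dec_nth) auto
    have "(\<Sum>j<Suc n. Dif l u ! j) = u!(l-n) + (u!(l-1-n) - u!(l-n))"
      using IH Suc False by (simp add: Dif_nth)
    also have "\<dots> = u!(l - Suc n)" using lt by simp
    finally show ?thesis .
  qed
qed

lemma Ssum_Dif:
  assumes s: "sorted_wrt (>) u" and l: "length u = l"
  shows "Ssum l (Dif l u) = u"
proof (rule nth_equalityI)
  show "length (Ssum l (Dif l u)) = length u" using l by simp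
  fix i assume "i < length (Ssum l (Dif l u))"
  then have i: "i < l" by simp
  then show "Ssum l (Dif l u) ! i = u ! i"
    using tele[OF s l, of "l-i"] by (simp add: Ssum_nth)
qed

lemma Dif_Ssum:
  assumes l: "length v = l"
  shows "Dif l (Ssum l v) = v"
proof (rule nth_equalityI)
  show "length (Dif l (Ssum l v)) = length v" using l by simp
  fix i assume "i < length (Dif l (Ssum l v))"
  then have i: "i < l" by simp
  have a: "Ssum l v ! (l-1-i) = (\<Sum>j<Suc i. v!j)" using i by (simp add: Ssum_nth Suc_diff_Suc)
  show "Dif l (Ssum l v) ! i = v ! i"
  proof (cases "i = 0")
    case True then show ?thesis using i a by (simp add: Dif_nth)
  next
    case False
    have b: "Ssum l v ! (l-i) = (\<Sum>j<i. v!j)" using i False by (simp add: Ssum_nth)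
    show ?thesis using i a b False by (simp add: Dif_nth)
  qed
qed

lemma sum_tri_cond: "(\<Sum>i<(l::nat)-j. f i) = (\<Sum>i<l. if i + j < l then f i else (0::'a::comm_monoid_add))"
proof -
  have "{i\<in>{..<l}. i + j < l} = {..<l-j}" by auto
  then show ?thesis using sum.inter_filter[of "{..<l}" f "\<lambda>i. i + j < l"] by simp
qed

lemma tri_swap: "(\<Sum>j<(l::nat). \<Sum>i<l-j. f j i) = (\<Sum>i<l. \<Sum>j<l-i. (f j i::'a::comm_monoid_add))"
proof -
  have "(\<Sum>j<l. \<Sum>i<l-j. f j i) = (\<Sum>j<l. \<Sum>i<l. if i + j < l then f j i else 0)"
    by (simp add: sum_tri_cond)
  also have "\<dots> = (\<Sum>i<l. \<Sum>j<l. if i + j < l then f j i else 0)"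
    by (rule sum.swap)
  also have "\<dots> = (\<Sum>i<l. \<Sum>j<l-i. f j i)"
    by (simp add: sum_tri_cond add.commute)
  finally show ?thesis .
qed

lemma abel:
  assumes s: "sorted_wrt (>) u" and l: "length u = l"
  shows "(\<Sum>i<l. Ssum l v ! i * Dif l u ! i) = (\<Sum>j<l. u!j * v!j)"
proof -
  have "(\<Sum>j<l. u!j * v!j) = (\<Sum>j<l. (\<Sum>i<l-j. Dif l u ! i) * v!j)"
  proof (rule sum.cong[OF refl])
    fix j assume "j \<in> {..<l}"
    then have "u!j = Ssum l (Dif l u) ! j" using Ssum_Dif[OF s l] by simp
    also have "\<dots> = (\<Sum>i<l-j. Dif l u ! i)" using \<open>j \<in> {..<l}\<close> by (simp add: Ssum_nth)
    finally show "u!j * v!j = (\<Sum>i<l-j. Dif l u ! i) * v!j" by simp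
  qed
  also have "\<dots> = (\<Sum>j<l. \<Sum>i<l-j. Dif l u ! i * v!j)" by (simp add: sum_distrib_right)
  also have "\<dots> = (\<Sum>i<l. \<Sum>j<l-i. Dif l u ! i * v!j)" by (rule tri_swap)
  also have "\<dots> = (\<Sum>i<l. Ssum l v ! i * Dif l u ! i)"
    by (simp add: Ssum_nth sum_distrib_left mult.commute)
  finally show ?thesis by simp
qed

definition theta :: "nat \<Rightarrow> nat list \<times> nat list \<Rightarrow> nat list \<times> nat list" where
  "theta l p = (Ssum l (snd p), Dif l (fst p))"

lemma theta_Pset:
  assumes p: "(u,v) \<in> Pset l N"
  shows "theta l (u,v) \<in> Pset l N"
proof -
  have lu: "length u = l" and lv: "length v = l" and s: "sorted_wrt (>) u"
    and up: "\<And>k. k < l \<Longrightarrow> 0 < u!k" and vp: "\<And>k. k < l \<Longrightarrow> 0 < v!k"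
    and sN: "(\<Sum>j<l. u!j * v!j) = N"
    using p by (auto simp: Pset_def all_set_conv_all_nth)
  have sort: "sorted_wrt (>) (Ssum l v)"
  proof (clarsimp simp: sorted_wrt_iff_nth_less)
    fix i j assume ij: "i < j" "j < l"
    have "(\<Sum>k<l-j. v!k) < (\<Sum>k<l-j. v!k) + v!(l-j)" using vp ij by simp
    also have "\<dots> = (\<Sum>k<Suc (l-j). v!k)" by simp
    also have "\<dots> \<le> (\<Sum>k<l-i. v!k)" by (rule sum_mono2) (use ij in auto)
    finally show "Ssum l v ! j < Ssum l v ! i" using ij by (simp add: Ssum_nth)
  qed
  have Sp: "\<And>i. i < l \<Longrightarrow> 0 < Ssum l v ! i"
  proof -
    fix i assume i: "i < l"
    have "v!0 \<le> (\<Sum>k<l-i. v!k)" by (rule member_le_sum) (use i in auto)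
    then show "0 < Ssum l v ! i" using vp[of 0] i by (simp add: Ssum_nth)
  qed
  have Dp: "\<And>i. i < l \<Longrightarrow> 0 < Dif l u ! i"
  proof -
    fix i assume i: "i < l"
    show "0 < Dif l u ! i"
    proof (cases "i = 0")
      case True then show ?thesis using up i by (simp add: Dif_nth)
    next
      case False
      have "u!(l-i) < u!(l-1-i)" using s lu i False by (intro dec_nth) auto
      then show ?thesis using i False by (simp add: Dif_nth)
    qed
  qed
  have "(\<Sum>j<l. Ssum l v ! j * Dif l u ! j) = N" using abel[OF s lu] sN by simp
  then show ?thesis
    using sort Sp Dp by (auto simp: Pset_def theta_def all_set_conv_all_nth)
qed

lemma theta_theta:
  assumes p: "(u,v) \<in> Pset l N"
  shows "theta l (theta l (u,v)) = (u,v)"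
  using p by (auto simp: theta_def Pset_def Ssum_Dif Dif_Ssum)


definition Kc :: "rat \<Rightarrow> rpoly" where "Kc r = Poly_Mapping.single 0 r"

lemma Kc_mult: "Kc (r * s) = Kc r * Kc s" by (simp add: Kc_def mult_single)
lemma Kc_add: "Kc (r + s) = Kc r + Kc s" by (simp add: Kc_def single_add)
lemma Kc_diff: "Kc (r - s) = Kc r - Kc s" by (simp add: Kc_def single_diff)
lemma Kc_1: "Kc 1 = 1" by (simp add: Kc_def)
lemma Kc_0: "Kc 0 = 0" by (simp add: Kc_def)
lemma Kc_of_nat: "Kc (of_nat n) = of_nat n" by (simp add: Kc_def)
lemma Kc_pow: "Kc (r ^ n) = Kc r ^ n" by (induction n) (simp_all add: Kc_1 Kc_mult)
lemma Kc_prod: "Kc (prod f A) = (\<Prod>x\<in>A. Kc (f x))"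
  by (induction A rule: infinite_finite_induct) (simp_all add: Kc_1 Kc_mult)
lemma Kc_sum: "Kc (sum f A) = (\<Sum>x\<in>A. Kc (f x))"
  by (induction A rule: infinite_finite_induct) (simp_all add: Kc_0 Kc_add)

lemma lookup_Kc: "Poly_Mapping.lookup (Kc r * p) m = r * Poly_Mapping.lookup p m"
  unfolding Kc_def
  by (smt (verit, best) map.rep_eq mult_map_scale_conv_mult mult_zero_right when_def)

lemma pvar_pow: "pvar k ^ n = Poly_Mapping.single (Poly_Mapping.single k n) 1"
proof (induction n)
  case 0 then show ?case by simp
next
  case (Suc n)
  have "pvar k ^ Suc n = pvar k * pvar k ^ n" by simp
  also have "\<dots> = Poly_Mapping.single (Poly_Mapping.single k 1 + Poly_Mapping.single k n) 1"
    unfolding Suc.IH by (simp add: pvar_def mult_single)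
  also have "Poly_Mapping.single k 1 + Poly_Mapping.single k n = Poly_Mapping.single k (Suc n)"
    by (simp add: single_add[symmetric])
  finally show ?case .
qed

lemma prod_single1: "finite A \<Longrightarrow> (\<Prod>k\<in>A. Poly_Mapping.single (f k) (1::rat)) = Poly_Mapping.single (\<Sum>k\<in>A. f k) 1"
  by (induction A rule: finite_induct) (simp_all add: mult_single)

definition monm :: "nat \<Rightarrow> nat list \<Rightarrow> (nat \<Rightarrow>\<^sub>0 nat)" where
  "monm m \<beta> = (\<Sum>k<m. Poly_Mapping.single k (\<beta>!k))"

lemma lookup_monm: "i < m \<Longrightarrow> Poly_Mapping.lookup (monm m \<beta>) i = \<beta>!i"
  by (simp add: monm_def lookup_sum lookup_single when_def)

lemma monm_inj: "length \<beta> = m \<Longrightarrow> length \<beta>' = m \<Longrightarrow> monm m \<beta> = monm m \<beta>' \<Longrightarrow> \<beta> = \<beta>'"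
  by (rule nth_equalityI) (auto dest: arg_cong[where f = "\<lambda>p. Poly_Mapping.lookup p _"] simp: lookup_monm[symmetric])

lemma prod_pvar: "(\<Prod>k<m. pvar k ^ (\<beta>!k)) = Poly_Mapping.single (monm m \<beta>) 1"
  by (simp add: pvar_pow prod_single1 monm_def)

lemma rearr:
  "(\<Prod>i<m. (Kc (c i) * F i) ^ (z!i) * Kc (1 / fact (z!i)))
   = Kc (\<Prod>i<m. c i ^ (z!i) / fact (z!i)) * (\<Prod>i<m. F i ^ (z!i))"
proof -
  have "(\<Prod>i<m. (Kc (c i) * F i) ^ (z!i) * Kc (1 / fact (z!i)))
      = (\<Prod>i<m. Kc (c i ^ (z!i) / fact (z!i)) * F i ^ (z!i))"
    by (rule prod.cong) (simp_all add: power_mult_distrib Kc_pow[symmetric] Kc_mult[symmetric] mult_ac)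
  also have "\<dots> = Kc (\<Prod>i<m. c i ^ (z!i) / fact (z!i)) * (\<Prod>i<m. F i ^ (z!i))"
    by (simp add: prod.distrib Kc_prod)
  finally show ?thesis .
qed

lemma GL1:
  "(\<Sum>z\<in>Cset m D. \<Prod>i<m. G i ^ (z!i) * Kc (1 / fact (z!i))) = (\<Sum>i<m. G i) ^ D * Kc (1 / fact D)"
proof (induction m arbitrary: G D)
  case 0
  have "Cset 0 D = (if D = 0 then {[]} else {})" by (auto simp: Cset_def)
  then show ?case by (cases D) (simp_all add: Kc_1)
next
  case (Suc m)
  define S where "S = (\<Sum>i<m. G (Suc i))"
  have "(\<Sum>w\<in>Cset (Suc m) D. \<Prod>i<Suc m. G i ^ (w!i) * Kc (1 / fact (w!i)))
      = (\<Sum>(k,z)\<in>(SIGMA k:{0..D}. Cset m (D-k)). (G 0 ^ k * Kc (1 / fact k)) * (\<Prod>i<m. G (Suc i) ^ (z!i) * Kc (1 / fact (z!i))))"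
    unfolding Cset_Suc
    by (subst sum.reindex) (auto simp: inj_on_def simp del: prod.lessThan_Suc simp add: prod.lessThan_Suc_shift intro!: sum.cong)
  also have "\<dots> = (\<Sum>k=0..D. (G 0 ^ k * Kc (1 / fact k)) * (\<Sum>z\<in>Cset m (D-k). \<Prod>i<m. G (Suc i) ^ (z!i) * Kc (1 / fact (z!i))))"
    by (subst sum.Sigma[symmetric]) (auto simp: finite_Cset sum_distrib_left)
  also have "\<dots> = (\<Sum>k=0..D. (G 0 ^ k * Kc (1 / fact k)) * (S ^ (D-k) * Kc (1 / fact (D-k))))"
    by (simp add: Suc.IH S_def)
  also have "\<dots> = (\<Sum>k\<le>D. of_nat (D choose k) * G 0 ^ k * S ^ (D - k)) * Kc (1 / fact D)"
  proof -
    have key: "(G 0 ^ k * Kc (1 / fact k)) * (S ^ (D-k) * Kc (1 / fact (D-k))) = of_nat (D choose k) * G 0 ^ k * S ^ (D - k) * Kc (1 / fact D)"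
      if k: "k \<le> D" for k
    proof -
      have "Kc (1 / fact k) * Kc (1 / fact (D-k)) = of_nat (D choose k) * Kc (1 / fact D)"
        using k by (simp add: Kc_mult[symmetric] Kc_of_nat[symmetric] binomial_fact field_simps)
      then show ?thesis by (metis (no_types, lifting) mult.assoc mult.left_commute)
    qed
    show ?thesis unfolding atLeast0AtMost sum_distrib_right by (intro sum.cong refl key) simp
  qed
  also have "\<dots> = (\<Sum>i<Suc m. G i) ^ D * Kc (1 / fact D)"
    unfolding sum.lessThan_Suc_shift S_def[symmetric] binomial_ring ..
  finally show ?case .
qed

lemma GL2:
  "(\<Sum>k<m. Kc (d k) * pvar k) ^ D * Kc (1 / fact D)
   = (\<Sum>\<beta>\<in>Cset m D. Kc (\<Prod>k<m. d k ^ (\<beta>!k) / fact (\<beta>!k)) * Poly_Mapping.single (monm m \<beta>) 1)"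
  unfolding GL1[symmetric, of "\<lambda>k. Kc (d k) * pvar k"] rearr prod_pvar ..

lemma GL:
  assumes lin: "(\<Sum>i<m. Kc (c i) * F i) = (\<Sum>k<m'. Kc (d k) * pvar k)" and \<beta>: "\<beta> \<in> Cset m' D"
  shows "(\<Sum>z\<in>Cset m D. (\<Prod>i<m. c i ^ (z!i) / fact (z!i)) * Poly_Mapping.lookup (\<Prod>i<m. F i ^ (z!i)) (monm m' \<beta>))
       = (\<Prod>k<m'. d k ^ (\<beta>!k) / fact (\<beta>!k))"
proof -
  have "(\<Sum>z\<in>Cset m D. Kc (\<Prod>i<m. c i ^ (z!i) / fact (z!i)) * (\<Prod>i<m. F i ^ (z!i)))
      = (\<Sum>\<beta>\<in>Cset m' D. Kc (\<Prod>k<m'. d k ^ (\<beta>!k) / fact (\<beta>!k)) * Poly_Mapping.single (monm m' \<beta>) 1)"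
    unfolding GL2[symmetric] lin[symmetric] GL1[symmetric, of "\<lambda>i. Kc (c i) * F i"] rearr ..
  then have "Poly_Mapping.lookup (\<Sum>z\<in>Cset m D. Kc (\<Prod>i<m. c i ^ (z!i) / fact (z!i)) * (\<Prod>i<m. F i ^ (z!i))) (monm m' \<beta>)
      = Poly_Mapping.lookup (\<Sum>\<beta>\<in>Cset m' D. Kc (\<Prod>k<m'. d k ^ (\<beta>!k) / fact (\<beta>!k)) * Poly_Mapping.single (monm m' \<beta>) 1) (monm m' \<beta>)"
    by simp
  also have "\<dots> = (\<Sum>\<beta>'\<in>Cset m' D. if \<beta>' = \<beta> then (\<Prod>k<m'. d k ^ (\<beta>'!k) / fact (\<beta>'!k)) else 0)"
  proof (unfold lookup_sum lookup_Kc, rule sum.cong[OF refl])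
    fix \<beta>' assume "\<beta>' \<in> Cset m' D"
    then have "monm m' \<beta>' = monm m' \<beta> \<longleftrightarrow> \<beta>' = \<beta>" using \<beta> monm_inj[of \<beta>' m' \<beta>] by (auto simp: Cset_def)
    then show "(\<Prod>k<m'. d k ^ (\<beta>'!k) / fact (\<beta>'!k)) * Poly_Mapping.lookup (Poly_Mapping.single (monm m' \<beta>') 1) (monm m' \<beta>)
        = (if \<beta>' = \<beta> then (\<Prod>k<m'. d k ^ (\<beta>'!k) / fact (\<beta>'!k)) else 0)"
      by (simp add: lookup_single when_def)
  qed
  also have "\<dots> = (\<Prod>k<m'. d k ^ (\<beta>!k) / fact (\<beta>!k))"
    using \<beta> by (simp add: finite_Cset)
  finally show ?thesis by (simp add: lookup_sum lookup_Kc)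
qed


lemma prod_split2: "(\<Prod>i<l+(l'::nat). f i) = (\<Prod>i<l. f i) * (\<Prod>i<l'. (f (l+i) :: 'a::comm_monoid_mult))"
  by (induction l') (simp_all add: mult_ac)

lemma sum_split2: "(\<Sum>i<l+(l'::nat). f i) = (\<Sum>i<l. f i) + (\<Sum>i<l'. (f (l+i) :: 'a::comm_monoid_add))"
  by (induction l') (simp_all add: add_ac)

definition Qset :: "nat \<Rightarrow> nat \<Rightarrow> (nat list \<times> nat list) set" where
  "Qset l D = {(a',b'). length a' = l \<and> length b' = l \<and> sum_list a' + sum_list b' = D}"

lemma Qset_reindex:
  "(\<Sum>(a',b')\<in>Qset l D. h a' b') = (\<Sum>z\<in>Cset (l+l) D. h (take l z) (drop l z))"
proof (rule sum.reindex_bij_witness[where j = "\<lambda>(a',b'). a' @ b'" and i = "\<lambda>z. (take l z, drop l z)"])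
  fix p assume "p \<in> Qset l D"
  then show "(take l (case p of (a', b') \<Rightarrow> a' @ b'), drop l (case p of (a', b') \<Rightarrow> a' @ b')) = p"
    "(case p of (a', b') \<Rightarrow> a' @ b') \<in> Cset (l + l) D"
    "h (take l (case p of (a', b') \<Rightarrow> a' @ b')) (drop l (case p of (a', b') \<Rightarrow> a' @ b')) = (case p of (a', b') \<Rightarrow> h a' b')"
    by (auto simp: Qset_def Cset_def)
next
  fix z assume z: "z \<in> Cset (l+l) D"
  show "(case (take l z, drop l z) of (a', b') \<Rightarrow> a' @ b') = z" by simp
  have "sum_list (take l z) + sum_list (drop l z) = sum_list z"
    by (metis append_take_drop_id sum_list_append)
  then show "(take l z, drop l z) \<in> Qset l D" using z by (auto simp: Qset_def Cset_def)
qed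

lemma Xpart: "(\<Sum>j<l. Kc (of_nat (v!j)) * Xsub l j) = (\<Sum>i<l. Kc (of_nat (Ssum l v ! i)) * pvar (l+i))"
proof -
  have "(\<Sum>j<l. Kc (of_nat (v!j)) * Xsub l j) = (\<Sum>j<l. \<Sum>i<l-j. Kc (of_nat (v!j)) * pvar (l+i))"
    by (simp add: Xsub_def sum_distrib_left)
  also have "\<dots> = (\<Sum>i<l. \<Sum>j<l-i. Kc (of_nat (v!j)) * pvar (l+i))" by (rule tri_swap)
  also have "\<dots> = (\<Sum>i<l. Kc (of_nat (Ssum l v ! i)) * pvar (l+i))"
    by (rule sum.cong[OF refl]) (simp add: Ssum_nth Kc_sum sum_distrib_right)
  finally show ?thesis .
qed

lemma Ypart:
  assumes s: "sorted_wrt (>) u" and lu: "length u = l"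
  shows "(\<Sum>j<l. Kc (of_nat (u!j)) * Ysub l j) = (\<Sum>i<l. Kc (of_nat (Dif l u ! i)) * pvar i)"
proof -
  have Y1: "Ysub l j = pvar (l-1-j) - (if j = 0 then 0 else pvar (l-j))" for j
    by (simp add: Ysub_def diff_commute)
  have "(\<Sum>j<l. Kc (of_nat (u!j)) * Ysub l j)
      = (\<Sum>j<l. Kc (of_nat (u!j)) * pvar (l-1-j)) - (\<Sum>j<l. if j = 0 then 0 else Kc (of_nat (u!j)) * pvar (l-j))"
    by (simp add: Y1 right_diff_distrib sum_subtractf[symmetric] if_distrib cong: if_cong)
  also have "(\<Sum>j<l. Kc (of_nat (u!j)) * pvar (l-1-j)) = (\<Sum>i<l. Kc (of_nat (u!(l-1-i))) * pvar i)"
  proof -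
    have "(\<Sum>i<l. Kc (of_nat (u!(l-1-i))) * pvar i) = (\<Sum>j<l. Kc (of_nat (u!(l-1-(l - Suc j)))) * pvar (l - Suc j))"
      by (rule sum.nat_diff_reindex[symmetric])
    also have "\<dots> = (\<Sum>j<l. Kc (of_nat (u!j)) * pvar (l-1-j))"
      by (rule sum.cong) auto
    finally show ?thesis by simp
  qed
  also have "(\<Sum>j<l. if j = 0 then 0 else Kc (of_nat (u!j)) * pvar (l-j))
      = (\<Sum>i<l. if i = 0 then 0 else Kc (of_nat (u!(l-i))) * pvar i)"
    by (rule sum.reindex_bij_witness[where i = "\<lambda>j. if j = 0 then 0 else l - j" and j = "\<lambda>j. if j = 0 then 0 else l - j"])
       auto
  also have "(\<Sum>i<l. Kc (of_nat (u!(l-1-i))) * pvar i) - (\<Sum>i<l. if i = 0 then 0 else Kc (of_nat (u!(l-i))) * pvar i)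
      = (\<Sum>i<l. Kc (of_nat (Dif l u ! i)) * pvar i)"
  proof -
    have "Kc (of_nat (Dif l u ! i)) * pvar i = Kc (of_nat (u!(l-1-i))) * pvar i - (if i = 0 then 0 else Kc (of_nat (u!(l-i))) * pvar i)"
      if i: "i < l" for i
    proof (cases "i = 0")
      case True then show ?thesis using i by (simp add: Dif_nth)
    next
      case False
      have "u!(l-i) < u!(l-1-i)" using s lu i False by (intro dec_nth) auto
      then show ?thesis using i False by (simp add: Dif_nth of_nat_diff Kc_diff left_diff_distrib)
    qed
    then show ?thesis by (simp add: sum_subtractf[symmetric])
  qed
  finally show ?thesis .
qed

lemma PL:
  assumes la: "length a = l" and lb: "length b = l" and lu: "length u = l" and lv: "length v = l"
    and s: "sorted_wrt (>) u"
  shows "(\<Sum>(a',b')\<in>Qset l (sum_list a + sum_list b).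
            Poly_Mapping.lookup (\<Prod>j<l. Xsub l j ^ (a'!j) * Ysub l j ^ (b'!j)) (pmono l a b) * monoW l a' b' u v)
       = monoW l a b (Ssum l v) (Dif l u)"
proof -
  define D where "D = sum_list a + sum_list b"
  define F where "F i = (if i < l then Xsub l i else Ysub l (i-l))" for i
  define c where "c i = (if i < l then (of_nat (v!i)::rat) else of_nat (u!(i-l)))" for i
  define d where "d k = (if k < l then (of_nat (Dif l u ! k)::rat) else of_nat (Ssum l v ! (k-l)))" for k
  have mon: "monm (l+l) (a@b) = pmono l a b"
    unfolding monm_def pmono_def sum_split2 using la by (simp add: nth_append sum.distrib)
  have lin: "(\<Sum>i<l+l. Kc (c i) * F i) = (\<Sum>k<l+l. Kc (d k) * pvar k)"
    unfolding sum_split2 using Xpart[where l=l and v=v] Ypart[OF s lu]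
    by (simp add: F_def c_def d_def add.commute)
  have beta: "a @ b \<in> Cset (l+l) D" using la lb by (simp add: Cset_def D_def)
  have "(\<Sum>(a',b')\<in>Qset l D.
            Poly_Mapping.lookup (\<Prod>j<l. Xsub l j ^ (a'!j) * Ysub l j ^ (b'!j)) (pmono l a b) * monoW l a' b' u v)
     = (\<Sum>z\<in>Cset (l+l) D. (\<Prod>i<l+l. c i ^ (z!i) / fact (z!i)) * Poly_Mapping.lookup (\<Prod>i<l+l. F i ^ (z!i)) (monm (l+l) (a@b)))"
    unfolding Qset_reindex
  proof (rule sum.cong[OF refl])
    fix z assume z: "z \<in> Cset (l+l) D"
    then have lz: "length z = l + l" by (simp add: Cset_def)
    have 1: "(\<Prod>i<l+l. F i ^ (z!i)) = (\<Prod>j<l. Xsub l j ^ (take l z!j) * Ysub l j ^ (drop l z!j))"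
      unfolding prod_split2 prod.distrib using lz by (simp add: F_def)
    have 2: "(\<Prod>i<l+l. c i ^ (z!i) / fact (z!i)) = monoW l (take l z) (drop l z) u v"
      unfolding prod_split2 monoW_def prod.distrib[symmetric] using lz by (intro prod.cong) (simp_all add: c_def mult_ac)
    show "Poly_Mapping.lookup (\<Prod>j<l. Xsub l j ^ (take l z!j) * Ysub l j ^ (drop l z!j)) (pmono l a b) * monoW l (take l z) (drop l z) u v
      = (\<Prod>i<l+l. c i ^ (z!i) / fact (z!i)) * Poly_Mapping.lookup (\<Prod>i<l+l. F i ^ (z!i)) (monm (l+l) (a@b))"
      unfolding 1 2 mon by simp
  qed
  also have "\<dots> = (\<Prod>k<l+l. d k ^ ((a@b)!k) / fact ((a@b)!k))"
    by (rule GL[OF lin beta])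
  also have "\<dots> = monoW l a b (Ssum l v) (Dif l u)"
    unfolding prod_split2 monoW_def prod.distrib[symmetric] using la by (intro prod.cong) (simp_all add: d_def nth_append mult_ac)
  finally show ?thesis by (simp add: D_def)
qed


lemma prod_list_shift: "prod_list (map f [1..<Suc n]) = (\<Prod>j<n. (f (Suc j) :: 'a::comm_monoid_mult))"
  by (induction n) (simp_all add: mult_ac)

lemma fac_prod:
  assumes es: "\<forall>e\<in>set es. 1 \<le> e" and p: "(U,V) \<in> Pset l N" and l: "l = length es"
  shows "prod_list (map (\<lambda>j. \<Prod>k\<in>{1..<es!(j-1)}. fac l j k U) [1..<Suc l])
       = (\<Prod>j<l. cc (es!j) (Dif l U ! j))"
  unfolding prod_list_shift
proof (rule prod.cong[OF refl])
  fix j assume "j \<in> {..<l}"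
  then have j: "j < l" by simp
  have "1 \<le> es!j" using es j l by auto
  then obtain e' where e': "es!j = Suc e'" by (cases "es!j") auto
  have lU: "length U = l" and sU: "sorted_wrt (>) U" using p by (auto simp: Pset_def)
  have "theta l (U,V) \<in> Pset l N" by (rule theta_Pset[OF p])
  then have npos: "1 \<le> Dif l U ! j" using j by (auto simp: theta_def Pset_def all_set_conv_all_nth Suc_le_eq)
  have dif: "(of_nat (Dif l U ! j) :: rat) = of_nat (U!(l-1-j)) - (if j = 0 then 0 else of_nat (U!(l-j)))"
  proof (cases "j = 0")
    case True then show ?thesis using j by (simp add: Dif_nth)
  next
    case False
    have "U!(l-j) < U!(l-1-j)" using sU lU j False by (intro dec_nth) auto
    then show ?thesis using j False by (simp add: Dif_nth of_nat_diff)
  qed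
  have f: "fac l (Suc j) k U = of_nat (Dif l U ! j) / of_nat k - 1" for k
  proof -
    have "l - Suc j + 1 = l - j" using j by simp
    moreover have "l - j < l \<longleftrightarrow> j \<noteq> 0" using j by auto
    ultimately show ?thesis unfolding dif fac_def by (simp add: diff_commute)
  qed
  show "(\<Prod>k\<in>{1..<es!(Suc j - 1)}. fac l (Suc j) k U) = cc (es!j) (Dif l U ! j)"
  proof -
    have e'': "es!(Suc j - 1) = Suc e'" using e' by simp
    show ?thesis unfolding e'' e' cc_prod[OF npos] f ..
  qed
qed

lemma part2:
  assumes es: "\<forall>e\<in>set es. 1 \<le> e" and la: "length a = length es" and lb: "length b = length es"
  shows "DY es Tbi a b = Tsubst es a b"
proof -
  define l where "l = length es"
  define D where "D = sum_list a + sum_list b"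
  define G where "G v = (\<Prod>j<l. cc (es!j) (v!j))" for v :: "nat list"
  define lk where "lk a' b' = Poly_Mapping.lookup (\<Prod>j<l. Xsub l j ^ (a'!j) * Ysub l j ^ (b'!j)) (pmono l a b)" for a' b'
  have la': "length a = l" and lb': "length b = l" using la lb by (simp_all add: l_def)
  have TS: "Tsubst es a b = (\<Sum>(a',b')\<in>Qset l D. fps_const (lk a' b') * Tgen es a' b')"
    by (simp add: Tsubst_def Qset_def Let_def l_def D_def lk_def)
  have T: "Tsubst es a b = cg l (\<lambda>U V. G (Dif l U)) a b"
  proof (rule fps_ext)
    fix N
    have "fps_nth (Tsubst es a b) N = (\<Sum>(a',b')\<in>Qset l D. lk a' b' * fps_nth (Tgen es a' b') N)"
      unfolding TS fps_sum_nth by (simp add: case_prod_beta)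
    also have "\<dots> = (\<Sum>(a',b')\<in>Qset l D. lk a' b' * (\<Sum>(u,v)\<in>Pset l N. G v * monoW l a' b' u v))"
    proof (rule sum.cong[OF refl])
      fix p assume "p \<in> Qset l D"
      then obtain a' b' where p: "p = (a',b')" "length a' = l" "length b' = l" by (auto simp: Qset_def)
      show "(case p of (a',b') \<Rightarrow> lk a' b' * fps_nth (Tgen es a' b') N)
          = (case p of (a',b') \<Rightarrow> lk a' b' * (\<Sum>(u,v)\<in>Pset l N. G v * monoW l a' b' u v))"
        using p Tgen_eq[OF es, of a' b'] by (simp add: l_def cg_def G_def)
    qed
    also have "\<dots> = (\<Sum>(a',b')\<in>Qset l D. \<Sum>(u,v)\<in>Pset l N. G v * (lk a' b' * monoW l a' b' u v))"
      by (simp add: sum_distrib_left case_prod_beta mult_ac)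
    also have "\<dots> = (\<Sum>(u,v)\<in>Pset l N. \<Sum>(a',b')\<in>Qset l D. G v * (lk a' b' * monoW l a' b' u v))"
      unfolding case_prod_beta by (rule sum.swap)
    also have "\<dots> = (\<Sum>(u,v)\<in>Pset l N. G v * monoW l a b (Ssum l v) (Dif l u))"
    proof (rule sum.cong[OF refl])
      fix p assume "p \<in> Pset l N"
      then obtain u v where p: "p = (u,v)" "length u = l" "length v = l" "sorted_wrt (>) u"
        by (auto simp: Pset_def)
      have "(\<Sum>(a',b')\<in>Qset l D. G v * (lk a' b' * monoW l a' b' u v))
          = G v * (\<Sum>(a',b')\<in>Qset l D. lk a' b' * monoW l a' b' u v)"
        by (simp add: sum_distrib_left case_prod_beta)
      also have "\<dots> = G v * monoW l a b (Ssum l v) (Dif l u)"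
        using PL[OF la' lb' p(2) p(3) p(4)] by (simp add: lk_def D_def)
      finally show "(case p of (u,v) \<Rightarrow> \<Sum>(a',b')\<in>Qset l D. G v * (lk a' b' * monoW l a' b' u v))
          = (case p of (u,v) \<Rightarrow> G v * monoW l a b (Ssum l v) (Dif l u))" using p by simp
    qed
    also have "\<dots> = (\<Sum>(U,V)\<in>Pset l N. G (Dif l U) * monoW l a b U V)"
    proof (rule sum.reindex_bij_witness[where i = "theta l" and j = "theta l"])
      fix p assume p: "p \<in> Pset l N"
      obtain u v where uv: "p = (u,v)" by (cases p)
      show "theta l (theta l p) = p" using theta_theta p uv by simp
      show "theta l p \<in> Pset l N" using theta_Pset p uv by simp
      have lv: "length v = l" using p uv by (simp add: Pset_def)
      show "(case theta l p of (U,V) \<Rightarrow> G (Dif l U) * monoW l a b U V) = (case p of (u,v) \<Rightarrow> G v * monoW l a b (Ssum l v) (Dif l u))"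
        using uv lv by (simp add: theta_def Dif_Ssum)
    next
      fix p assume p: "p \<in> Pset l N"
      obtain u v where uv: "p = (u,v)" by (cases p)
      show "theta l (theta l p) = p" using theta_theta p uv by simp
      show "theta l p \<in> Pset l N" using theta_Pset p uv by simp
    qed
    finally show "fps_nth (Tsubst es a b) N = fps_nth (cg l (\<lambda>U V. G (Dif l U)) a b) N"
      by (simp add: cg_def)
  qed
  have "DY es Tbi a b = cg l (\<lambda>u v. prod_list (map (\<lambda>j. \<Prod>k\<in>{1..<es!(j-1)}. fac l j k u) [1..<Suc l])) a b"
    using DY_agree[of es] la' lb' by (simp add: agrees_def l_def)
  also have "\<dots> = cg l (\<lambda>U V. G (Dif l U)) a b"
  proof (rule fps_ext)
    fix N
    show "fps_nth (cg l (\<lambda>u v. prod_list (map (\<lambda>j. \<Prod>k\<in>{1..<es!(j-1)}. fac l j k u) [1..<Suc l])) a b) N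
        = fps_nth (cg l (\<lambda>U V. G (Dif l U)) a b) N"
      unfolding cg_def fps_nth_Abs_fps
      apply (rule sum.cong[OF refl])
      apply clarify
      apply (subst fac_prod[OF es _ l_def], assumption)
      apply (simp add: G_def)
      done
  qed
  finally show ?thesis using T by simp
qed


definition pe :: "nat \<Rightarrow> rat poly" where
  "pe e = (\<Prod>k\<in>{1..<e}. [:-1, 1 / of_nat k:])"

lemma cc_poly:
  assumes e: "1 \<le> e" and n: "1 \<le> n"
  shows "cc e n = poly (pe e) (of_nat n)"
proof -
  obtain e' where e': "e = Suc e'" using e by (cases e) auto
  show ?thesis unfolding e' cc_prod[OF n] pe_def poly_prod
    by (rule prod.cong) (simp_all add: field_simps)
qed

lemma per_j:
  assumes e: "1 \<le> e" and v: "1 \<le> v"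
  shows "cc e v * (X * (of_nat v ^ a / fact a))
     = (\<Sum>t\<le>Polynomial.degree (pe e). (coeff (pe e) t * fact (a+t) / fact a) * (X * (of_nat v ^ (a+t) / fact (a+t))))"
proof -
  have "cc e v * (X * (of_nat v ^ a / fact a))
      = (\<Sum>t\<le>Polynomial.degree (pe e). coeff (pe e) t * of_nat v ^ t) * (X * (of_nat v ^ a / fact a))"
    by (simp add: cc_poly[OF e v] poly_altdef)
  also have "\<dots> = (\<Sum>t\<le>Polynomial.degree (pe e). (coeff (pe e) t * fact (a+t) / fact a) * (X * (of_nat v ^ (a+t) / fact (a+t))))"
    unfolding sum_distrib_right
    by (rule sum.cong[OF refl]) (simp add: power_add field_simps)
  finally show ?thesis .
qed

lemma BD_zero: "0 \<in> BD"
  using BD_smult[OF BD_one, of 0] by simp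

lemma BD_sum: "finite A \<Longrightarrow> (\<And>x. x \<in> A \<Longrightarrow> f x \<in> BD) \<Longrightarrow> sum f A \<in> BD"
  by (induction A rule: finite_induct) (auto intro: BD_zero BD_add)

lemma Tbi_BD: "length aa = length b \<Longrightarrow> Tbi aa b \<in> BD"
  unfolding Tbi_def by (rule BD_bibr) auto

lemma part1:
  assumes es: "\<forall>e\<in>set es. 1 \<le> e" and la: "length a = length es" and lb: "length b = length es"
  shows "Tgen es a b \<in> BD"
proof -
  define l where "l = length es"
  define dg where "dg j = Polynomial.degree (pe (es!j))" for j
  define \<kappa> where "\<kappa> j t = coeff (pe (es!j)) t * fact (a!j + t) / fact (a!j)" for j t
  define A where "A \<tau> = map (\<lambda>j. a!j + \<tau> j) [0..<l]" for \<tau> :: "nat \<Rightarrow> nat"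
  define PI where "PI = Pi\<^sub>E {..<l} (\<lambda>j. {..dg j})"
  have finPI: "finite PI" unfolding PI_def by (rule finite_PiE) auto
  have lA: "length (A \<tau>) = l" for \<tau> by (simp add: A_def)
  have eq: "Tgen es a b = (\<Sum>\<tau>\<in>PI. fps_const (\<Prod>j<l. \<kappa> j (\<tau> j)) * Tbi (A \<tau>) b)"
  proof (rule fps_ext)
    fix N
    have "fps_nth (Tgen es a b) N = (\<Sum>(u,v)\<in>Pset l N. (\<Prod>j<l. cc (es!j) (v!j)) * monoW l a b u v)"
      using Tgen_eq[OF es la lb] by (simp add: cg_def l_def)
    also have "\<dots> = (\<Sum>(u,v)\<in>Pset l N. \<Sum>\<tau>\<in>PI. (\<Prod>j<l. \<kappa> j (\<tau> j)) * monoW l (A \<tau>) b u v)"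
    proof (rule sum.cong[OF refl])
      fix p assume "p \<in> Pset l N"
      then obtain u v where p: "p = (u,v)" and vpos: "\<And>j. j < l \<Longrightarrow> 1 \<le> v!j" and lv: "length v = l"
        by (cases p) (auto simp: Pset_def all_set_conv_all_nth Suc_le_eq)
      have epos: "\<And>j. j < l \<Longrightarrow> 1 \<le> es!j" using es by (auto simp: l_def)
      define X where "X j = (of_nat (u!j) ^ (b!j) / fact (b!j) :: rat)" for j
      have "(\<Prod>j<l. cc (es!j) (v!j)) * monoW l a b u v
          = (\<Prod>j<l. cc (es!j) (v!j) * (X j * (of_nat (v!j) ^ (a!j) / fact (a!j))))"
        unfolding monoW_def X_def prod.distrib[symmetric] by (simp only: mult.assoc)
      also have "\<dots> = (\<Prod>j<l. \<Sum>t\<in>{..dg j}. \<kappa> j t * (X j * (of_nat (v!j) ^ (a!j + t) / fact (a!j + t))))"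
        by (rule prod.cong[OF refl]) (simp only: per_j[OF epos vpos] lessThan_iff \<kappa>_def dg_def atMost_iff)
      also have "\<dots> = (\<Sum>\<tau>\<in>PI. \<Prod>j<l. \<kappa> j (\<tau> j) * (X j * (of_nat (v!j) ^ (a!j + \<tau> j) / fact (a!j + \<tau> j))))"
        unfolding PI_def by (rule prod_sum_PiE) auto
      also have "\<dots> = (\<Sum>\<tau>\<in>PI. (\<Prod>j<l. \<kappa> j (\<tau> j)) * monoW l (A \<tau>) b u v)"
        unfolding monoW_def prod.distrib[symmetric]
        by (intro sum.cong refl prod.cong) (simp add: A_def X_def)
      finally show "(case p of (u,v) \<Rightarrow> (\<Prod>j<l. cc (es!j) (v!j)) * monoW l a b u v)
          = (case p of (u,v) \<Rightarrow> \<Sum>\<tau>\<in>PI. (\<Prod>j<l. \<kappa> j (\<tau> j)) * monoW l (A \<tau>) b u v)" using p by simp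
    qed
    also have "\<dots> = (\<Sum>\<tau>\<in>PI. \<Sum>(u,v)\<in>Pset l N. (\<Prod>j<l. \<kappa> j (\<tau> j)) * monoW l (A \<tau>) b u v)"
      unfolding case_prod_beta by (rule sum.swap)
    also have "\<dots> = fps_nth (\<Sum>\<tau>\<in>PI. fps_const (\<Prod>j<l. \<kappa> j (\<tau> j)) * Tbi (A \<tau>) b) N"
      unfolding fps_sum_nth fps_mult_left_const_nth Tbi_cg[OF lA]
      by (simp add: cg_def sum_distrib_left case_prod_beta)
    finally show "fps_nth (Tgen es a b) N = fps_nth (\<Sum>\<tau>\<in>PI. fps_const (\<Prod>j<l. \<kappa> j (\<tau> j)) * Tbi (A \<tau>) b) N" .
  qed
  show ?thesis unfolding eq
    by (rule BD_sum[OF finPI]) (rule BD_smult, rule Tbi_BD, simp add: lA lb l_def)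
qed

theorem proposition5p5:
  fixes es :: "nat list"
  assumes "\<forall>e\<in>set es. 1 \<le> e"
  shows "(\<forall>a b. length a = length es \<longrightarrow> length b = length es \<longrightarrow> Tgen es a b \<in> BD)
       \<and> (\<forall>a b. length a = length es \<longrightarrow> length b = length es \<longrightarrow> DY es Tbi a b = Tsubst es a b)"
  using part1[OF assms] part2[OF assms] by blast


end
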